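(* Let $n,m,q,L\ge 1$ and let $X\in\mathbb{R}^{n\times L}$, $U\in\mathbb{R}^{m\times L}$, $V\in\mathbb{R}^{q\times L}$, $E\in\mathbb{R}^{n\times q}$, $\mathcal{D}_{11}\in\mathbb{R}^{L\times L}$ be given, and let $\Sigma=\{(A,B)\in\mathbb{R}^{n\times n}\times\mathbb{R}^{n\times m}: X\mathcal{D}_{11}=AX+BU+EV\}$, assumed nonempty. Then the data $(X,U)$ are informative for stabilization (there exists $K\in\mathbb{R}^{m\times n}$ such that $A+BK$ is Hurwitz for all $(A,B)\in\Sigma$) if and only if there exists $\theta\in\mathbb{R}^{L\times n}$ with $X\theta=(X\theta)^{T}>0$ and $\theta^{T}(X\mathcal{D}_{11}-EV)^{T}+(X\mathcal{D}_{11}-EV)\theta<0$. Furthermore, for such $\theta$ the gain $K=U\theta(X\theta)^{-1}$ (which equals $UX^{+}$ with the right inverse $X^{+}=\theta(X\theta)^{-1}$ of $X$) makes $A+BK$ Hurwitz for all $(A,B)\in\Sigma$.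
   Context: The data arise from an agent $\dot x=\bar Ax+\bar Bu+Ev$ with unknown $(\bar A,\bar B)$ and known $E$, where $X,U,V$ collect the first $L$ coefficients of $x,u,v$ in a (Chebyshev) orthogonal polynomial basis and $\mathcal{D}_{11}$ is the leading $L\times L$ block of the basis differentiation matrix; in the noise-free case $(\bar A,\bar B)\in\Sigma$. Hurwitz means all eigenvalues have negative real part; $>0$ / $<0$ denote positive / negative definiteness of symmetric matrices. *)

theory Defs
  imports "HOL-Analysis.Analysis"
begin

definition cmat :: "real^'n^'m \<Rightarrow> complex^'n^'m" where
  "cmat M = (\<chi> i j. complex_of_real (M $ i $ j))"

definition eigenvalue :: "real^'n^'n \<Rightarrow> complex \<Rightarrow> bool" where
  "eigenvalue M c \<longleftrightarrow> (\<exists>v::complex^'n. v \<noteq> 0 \<and> cmat M *v v = c *s v)"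

definition hurwitz :: "real^'n^'n \<Rightarrow> bool" where
  "hurwitz M \<longleftrightarrow> (\<forall>c. eigenvalue M c \<longrightarrow> Re c < 0)"

definition pos_def :: "real^'n^'n \<Rightarrow> bool" where
  "pos_def M \<longleftrightarrow> transpose M = M \<and> (\<forall>x. x \<noteq> 0 \<longrightarrow> x \<bullet> (M *v x) > 0)"

definition neg_def :: "real^'n^'n \<Rightarrow> bool" where
  "neg_def M \<longleftrightarrow> transpose M = M \<and> (\<forall>x. x \<noteq> 0 \<longrightarrow> x \<bullet> (M *v x) < 0)"

definition Sigma_data ::
  "real^'l^'n \<Rightarrow> real^'l^'m \<Rightarrow> real^'l^'q \<Rightarrow> real^'q^'n \<Rightarrow> real^'l^'l
   \<Rightarrow> ((real^'n^'n) \<times> (real^'m^'n)) set" where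
  "Sigma_data X U V E D11 = {(A, B). X ** D11 = A ** X + B ** U + E ** V}"

end

theory Submission
  imports Defs "Jordan_Normal_Form.Schur_Decomposition"
begin


lemma sum_prod_le_sq:
  fixes u :: "nat \<Rightarrow> real"
  shows "(\<Sum>s<n. \<Sum>k<n. u s * u k) \<le> real n * (\<Sum>k<n. (u k)\<^sup>2)"
proof -
  have "(\<Sum>s<n. \<Sum>k<n. u s * u k) \<le> (\<Sum>s<n. \<Sum>k<n. ((u s)\<^sup>2 + (u k)\<^sup>2) / 2)"
  proof (intro sum_mono)
    fix s k
    show "u s * u k \<le> ((u s)\<^sup>2 + (u k)\<^sup>2) / 2"
    proof -
      have "0 \<le> (u s - u k)^2" by simp
      hence "2 * (u s * u k) \<le> (u s)^2 + (u k)^2" by (simp add: power2_diff mult.assoc)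
      thus ?thesis by simp
    qed
  qed
  also have "\<dots> = (\<Sum>s<n. \<Sum>k<n. (u s)\<^sup>2 / 2) + (\<Sum>s<n. \<Sum>k<n. (u k)\<^sup>2 / 2)"
    by (simp add: sum.distrib add_divide_distrib)
  also have "\<dots> = real n * (\<Sum>k<n. (u k)\<^sup>2 / 2) + real n * (\<Sum>k<n. (u k)\<^sup>2 / 2)"
    by (simp add: sum_distrib_left)
  also have "\<dots> = real n * (\<Sum>k<n. (u k)\<^sup>2)"
    by (simp add: sum_divide_distrib[symmetric])
  finally show ?thesis .
qed

lemma tri_lyap:
  fixes b :: "nat \<Rightarrow> nat \<Rightarrow> complex" and n :: nat
  assumes up: "\<And>s k. s < n \<Longrightarrow> k < n \<Longrightarrow> k < s \<Longrightarrow> b s k = 0"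
   and dg: "\<And>k. k < n \<Longrightarrow> Re (b k k) < 0"
  shows "\<exists>r::real. r > 0 \<and> (\<forall>z. (\<exists>k<n. z k \<noteq> 0) \<longrightarrow>
     Re (\<Sum>s<n. \<Sum>k<n. z s * b s k * of_real (r^(2*k)) * cnj (z k)) < 0)"
proof (cases "n = 0")
  case True thus ?thesis by (intro exI[of _ 1]) auto
next
  case False
  define \<alpha> where "\<alpha> = Min ((\<lambda>k. - Re (b k k)) ` {..<n})"
  have \<alpha>pos: "\<alpha> > 0" unfolding \<alpha>_def using False dg by (subst Min_gr_iff) auto
  have \<alpha>le: "\<alpha> \<le> - Re (b k k)" if "k < n" for k unfolding \<alpha>_def using that by (intro Min_le) auto
  define C where "C = 1 + (\<Sum>s<n. \<Sum>k<n. cmod (b s k))"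
  have C1: "C \<ge> 1" unfolding C_def by (simp add: sum_nonneg)
  have Cb: "cmod (b s k) \<le> C" if "s < n" "k < n" for s k
  proof -
    have "cmod (b s k) \<le> (\<Sum>k<n. cmod (b s k))"
      using that by (intro member_le_sum) auto
    also have "\<dots> \<le> (\<Sum>s<n. \<Sum>k<n. cmod (b s k))"
      using that by (intro member_le_sum[where f="\<lambda>s. \<Sum>k<n. cmod (b s k)"]) (auto intro: sum_nonneg)
    finally show ?thesis unfolding C_def by simp
  qed
  define r where "r = min (1/2) (\<alpha> / (2 * real n * C))"
  have rpos: "r > 0" using \<alpha>pos C1 False unfolding r_def by auto
  have r1: "r \<le> 1" unfolding r_def by auto
  have rC: "C * r * real n \<le> \<alpha> / 2"
  proof -
    have "r \<le> \<alpha> / (2 * real n * C)" unfolding r_def by auto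
    hence "C * r * real n \<le> C * (\<alpha> / (2 * real n * C)) * real n"
      using C1 by (intro mult_right_mono mult_left_mono) auto
    also have "\<dots> = \<alpha> / 2" using C1 False by (simp add: field_simps)
    finally show ?thesis .
  qed
  show ?thesis
  proof (intro exI[of _ r] conjI allI impI rpos)
    fix z :: "nat \<Rightarrow> complex"
    assume "\<exists>k<n. z k \<noteq> 0"
    then obtain k0 where k0: "k0 < n" "z k0 \<noteq> 0" by auto
    define y where "y k = r^(2*k)" for k
    define u where "u k = r^k * cmod (z k)" for k
    define S where "S = (\<Sum>k<n. (u k)\<^sup>2)"
    have Spos: "S > 0" unfolding S_def
    proof (rule sum_pos2[of _ k0])
      show "0 < (u k0)\<^sup>2" unfolding u_def using k0 rpos by auto
    qed (use k0 in auto)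
    define f where "f s k = z s * b s k * of_real (y k) * cnj (z k)" for s k
    have split: "f s k = (if s = k then f k k else 0) + (if s < k then f s k else 0)"
      if "s < n" "k < n" for s k
      using up[OF that] that unfolding f_def by (cases "s = k"; cases "s < k") auto
    have T: "(\<Sum>s<n. \<Sum>k<n. f s k) = (\<Sum>k<n. f k k) + (\<Sum>s<n. \<Sum>k<n. if s < k then f s k else 0)"
    proof -
      have "(\<Sum>s<n. \<Sum>k<n. f s k) = (\<Sum>s<n. \<Sum>k<n. (if s = k then f k k else 0) + (if s < k then f s k else 0))"
        using split by (intro sum.cong refl) auto
      also have "\<dots> = (\<Sum>s<n. \<Sum>k<n. (if s = k then f k k else 0)) + (\<Sum>s<n. \<Sum>k<n. if s < k then f s k else 0)"
        by (simp add: sum.distrib)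
      also have "(\<Sum>s<n. \<Sum>k<n. (if s = k then f k k else 0)) = (\<Sum>k<n. f k k)"
        by (simp add: sum.delta)
      finally show ?thesis .
    qed
    have D: "Re (\<Sum>k<n. f k k) \<le> - \<alpha> * S"
    proof -
      have "Re (\<Sum>k<n. f k k) = (\<Sum>k<n. Re (b k k) * (u k)\<^sup>2)"
        unfolding Re_sum
      proof (intro sum.cong refl)
        fix k
        have zz: "z k * cnj (z k) = of_real ((cmod (z k))\<^sup>2)" by (metis complex_norm_square of_real_power)
        have "f k k = b k k * of_real (y k) * (z k * cnj (z k))" unfolding f_def by (simp add: ac_simps)
        hence "f k k = b k k * of_real (y k * (cmod (z k))\<^sup>2)" unfolding zz by simp
        thus "Re (f k k) = Re (b k k) * (u k)\<^sup>2"
          unfolding u_def y_def by (simp add: power_mult_distrib power_mult power2_eq_square)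
      qed
      also have "\<dots> \<le> (\<Sum>k<n. - \<alpha> * (u k)\<^sup>2)"
      proof (intro sum_mono mult_right_mono)
        fix k assume "k \<in> {..<n}"
        thus "Re (b k k) \<le> - \<alpha>" using \<alpha>le[of k] by auto
      qed auto
      finally show ?thesis unfolding S_def by (simp add: sum_distrib_left)
    qed
    have O: "Re (\<Sum>s<n. \<Sum>k<n. if s < k then f s k else 0) \<le> \<alpha> / 2 * S"
    proof -
      have "Re (\<Sum>s<n. \<Sum>k<n. if s < k then f s k else 0) \<le> cmod (\<Sum>s<n. \<Sum>k<n. if s < k then f s k else 0)"
        by (rule complex_Re_le_cmod)
      also have "\<dots> \<le> (\<Sum>s<n. \<Sum>k<n. cmod (if s < k then f s k else 0))"
        by (rule order_trans[OF norm_sum sum_mono[OF norm_sum]])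
      also have "\<dots> \<le> (\<Sum>s<n. \<Sum>k<n. C * r * (u s * u k))"
      proof (intro sum_mono)
        fix s k assume s: "s \<in> {..<n}" and k: "k \<in> {..<n}"
        show "cmod (if s < k then f s k else 0) \<le> C * r * (u s * u k)"
        proof (cases "s < k")
          case False thus ?thesis using C1 rpos unfolding u_def by auto
        next
          case True
          have yk: "y k \<le> r * (r^s * r^k)"
          proof -
            have "y k = r^(2*k)" by (simp add: y_def)
            also have "\<dots> \<le> r^(Suc (s + k))"
              using True rpos r1 by (intro power_decreasing) auto
            finally show ?thesis by (simp add: power_add)
          qed
          have "cmod (f s k) = cmod (z s) * cmod (b s k) * y k * cmod (z k)"
            unfolding f_def y_def using rpos by (simp add: norm_mult norm_power)
          also have "\<dots> \<le> cmod (z s) * C * (r * (r^s * r^k)) * cmod (z k)"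
            using Cb s k yk C1 by (intro mult_right_mono mult_left_mono mult_mono) (auto simp: y_def)
          also have "\<dots> = C * r * (u s * u k)" unfolding u_def by (simp add: algebra_simps)
          finally show ?thesis using True by simp
        qed
      qed
      also have "\<dots> = C * r * (\<Sum>s<n. \<Sum>k<n. u s * u k)"
        by (simp add: sum_distrib_left)
      also have "\<dots> \<le> C * r * (real n * S)"
        unfolding S_def using C1 rpos by (intro mult_left_mono sum_prod_le_sq) auto
      also have "\<dots> \<le> \<alpha> / 2 * S"
        using rC Spos by (simp add: mult.assoc[symmetric]) 
      finally show ?thesis .
    qed
    have "Re (\<Sum>s<n. \<Sum>k<n. f s k) < 0"
      unfolding T using D O mult_pos_pos[OF \<alpha>pos Spos] by (simp only: plus_complex.sel)
    thus "Re (\<Sum>s<n. \<Sum>k<n. z s * b s k * of_real (r^(2*k)) * cnj (z k)) < 0"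
      unfolding f_def y_def .
  qed
qed


lemma jnf_schur:
  fixes A :: "complex mat"
  assumes A: "A \<in> carrier_mat n n" and ev: "\<And>e. eigenvalue A e \<Longrightarrow> Re e < 0"
  shows "\<exists>B P Q. B \<in> carrier_mat n n \<and> P \<in> carrier_mat n n \<and> Q \<in> carrier_mat n n \<and>
     P * Q = 1\<^sub>m n \<and> Q * P = 1\<^sub>m n \<and> A * P = P * B \<and>
     (\<forall>s<n. \<forall>k<s. B $$ (s,k) = 0) \<and> (\<forall>k<n. Re (B $$ (k,k)) < 0)"
proof -
  obtain es where cp: "char_poly A = (\<Prod>a\<leftarrow>es. [:- a, 1:])"
    using char_poly_factorized[OF A] by auto
  obtain B P Q where sd: "schur_decomposition A es = (B,P,Q)"
    by (cases "schur_decomposition A es") auto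
  from schur_decomposition[OF A cp sd]
  have sim: "similar_mat_wit A B P Q" and ut: "upper_triangular B" and dg: "diag_mat B = es" by auto
  note w = similar_mat_witD2[OF A sim]
  have B: "B \<in> carrier_mat n n" and P: "P \<in> carrier_mat n n" and Q: "Q \<in> carrier_mat n n"
    using w by auto
  have AP: "A * P = P * B"
  proof -
    have "A * P = P * B * Q * P" using w by simp
    also have "\<dots> = P * B * (Q * P)" using P B Q by (simp add: assoc_mult_mat[of _ n n _ n _ n])
    also have "\<dots> = P * B" using w P B by simp
    finally show ?thesis .
  qed
  have diag: "Re (B $$ (k,k)) < 0" if k: "k < n" for k
  proof -
    have "B $$ (k,k) \<in> set es" using dg[symmetric] k B unfolding diag_mat_def by auto
    moreover have pe: "poly (\<Prod>a\<leftarrow>es. [:- a, 1:]) e = (\<Prod>a\<leftarrow>es. e - a)" for e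
      by (induction es) (auto simp: algebra_simps)
    ultimately have "poly (char_poly A) (B $$ (k,k)) = 0"
      unfolding cp pe by (auto simp: prod_list_zero_iff)
    hence "eigenvalue A (B $$ (k,k))" using eigenvalue_root_char_poly[OF A] by simp
    thus ?thesis by (rule ev)
  qed
  have "\<forall>s<n. \<forall>k<s. B $$ (s,k) = 0" using ut B unfolding upper_triangular_def by auto
  thus ?thesis using B P Q w AP diag by blast
qed



no_notation vec_index (infixl \<open>$\<close> 100)

definition ix :: "nat \<Rightarrow> 'n::finite" where
  "ix = (SOME f. bij_betw f {..<CARD('n)} UNIV)"

lemma ix_bij: "bij_betw (ix :: nat \<Rightarrow> 'n::finite) {..<CARD('n)} UNIV"
proof -
  obtain h :: "nat \<Rightarrow> 'n" where "bij_betw h {0..<card (UNIV::'n set)} UNIV"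
    using ex_bij_betw_nat_finite[of "UNIV :: 'n set"] by auto
  hence "\<exists>f::nat\<Rightarrow>'n. bij_betw f {..<CARD('n)} UNIV" by (auto simp: lessThan_atLeast0)
  thus ?thesis unfolding ix_def by (rule someI_ex)
qed

definition ixi :: "'n::finite \<Rightarrow> nat" where
  "ixi = inv_into {..<CARD('n)} ix"

lemma ixi_lt[simp]: "ixi (i::'n::finite) < CARD('n)"
  unfolding ixi_def using ix_bij[where 'n='n]
  by (metis bij_betw_def inv_into_into lessThan_iff UNIV_I)

lemma ix_ixi[simp]: "ix (ixi (i::'n::finite)) = i"
  unfolding ixi_def using ix_bij[where 'n='n]
  by (metis bij_betw_def f_inv_into_f UNIV_I)

lemma ixi_ix[simp]: "k < CARD('n::finite) \<Longrightarrow> ixi (ix k :: 'n) = k"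
  unfolding ixi_def using ix_bij[where 'n='n]
  by (metis bij_betw_def inv_into_f_f lessThan_iff)

lemma sum_ix: "(\<Sum>i\<in>UNIV. f (i::'n::finite)) = (\<Sum>k<CARD('n). f (ix k))"
  using sum.reindex_bij_betw[OF ix_bij[where 'n='n], of f] by simp

lemma mult_entry:
  assumes "X \<in> carrier_mat n n" "Y \<in> carrier_mat n n" "a < n" "c < n"
  shows "(X * Y) $$ (a,c) = (\<Sum>k<n. X $$ (a,k) * Y $$ (k,c))"
  using assms by (simp add: scalar_prod_def lessThan_atLeast0 mult.commute)

lemma transpose_add_vec: "transpose (A + B) = transpose A + transpose (B :: 'a::semiring_1^'n^'m)"
  unfolding Finite_Cartesian_Product.vec_eq_iff by (simp add: transpose_def)

lemma zcnj: "z * cnj z = of_real ((cmod z)\<^sup>2)"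
  by (metis complex_norm_square of_real_power)

lemma lyap_conv:
  fixes M :: "real^'n^'n"
  assumes hw: "hurwitz M"
  shows "\<exists>P. pos_def P \<and> neg_def (M ** P + P ** transpose M)"
proof -
  define n where "n = CARD('n)"
  define A :: "complex mat" where "A = Matrix.mat n n (\<lambda>(i,j). complex_of_real (M $ ix i $ ix j))"
  have A: "A \<in> carrier_mat n n" unfolding A_def by simp
  have Aent: "A $$ (i,j) = of_real (M $ ix i $ ix j)" if "i<n" "j<n" for i j
    using that unfolding A_def by simp
  have ev: "Re e < 0" if "Char_Poly.eigenvalue A e" for e
  proof -
    from that obtain v where v: "v \<in> carrier_vec n" "v \<noteq> 0\<^sub>v n" "A *\<^sub>v v = e \<cdot>\<^sub>v v"
      unfolding Char_Poly.eigenvalue_def eigenvector_def using A by auto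
    define w :: "complex^'n" where "w = (\<chi> i. vec_index v (ixi i))"
    have "w \<noteq> 0"
    proof
      assume w0: "w = 0"
      have "v = 0\<^sub>v n"
      proof (rule eq_vecI)
        fix k assume "k < dim_vec (0\<^sub>v n)" hence k: "k < n" by simp
        have "vec_index v k = w $ ix k" unfolding w_def using k n_def by simp
        thus "vec_index v k = vec_index (0\<^sub>v n) k" using w0 k by simp
      qed (use v in auto)
      thus False using v by simp
    qed
    moreover have "cmat M *v w = e *s w"
    proof (rule Finite_Cartesian_Product.vec_eq_iff[THEN iffD2], rule allI)
      fix i :: 'n
      have "(cmat M *v w) $ i = (\<Sum>j\<in>UNIV. of_real (M $ i $ j) * vec_index v (ixi j))"
        unfolding cmat_def matrix_vector_mult_def w_def by simp
      also have "\<dots> = (\<Sum>k<n. of_real (M $ i $ ix k) * vec_index v k)"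
        unfolding sum_ix n_def by (intro sum.cong refl) simp
      also have "\<dots> = (\<Sum>k<n. A $$ (ixi i, k) * vec_index v k)"
        by (intro sum.cong refl) (simp add: Aent n_def)
      also have "\<dots> = vec_index (A *\<^sub>v v) (ixi i)"
        using v(1) A by (simp add: scalar_prod_def lessThan_atLeast0 n_def)
      also have "\<dots> = e * vec_index v (ixi i)" using v(1,3) by (simp add: n_def)
      also have "\<dots> = (e *s w) $ i" by (simp add: w_def)
      finally show "(cmat M *v w) $ i = (e *s w) $ i" .
    qed
    ultimately have "Defs.eigenvalue M e" unfolding Defs.eigenvalue_def by auto
    thus ?thesis using hw unfolding hurwitz_def by auto
  qed
  obtain B P Q where B: "B \<in> carrier_mat n n" and P: "P \<in> carrier_mat n n" and Q: "Q \<in> carrier_mat n n"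
    and PQ: "P * Q = 1\<^sub>m n" and QP: "Q * P = 1\<^sub>m n" and AP: "A * P = P * B"
    and Bup: "\<forall>s<n. \<forall>k<s. B $$ (s,k) = 0" and Bd: "\<forall>k<n. Re (B $$ (k,k)) < 0"
    using jnf_schur[OF A ev] by blast
  obtain r where r: "r > 0" and rl: "\<And>z. (\<exists>k<n. z k \<noteq> 0) \<Longrightarrow>
      Re (\<Sum>s<n. \<Sum>k<n. z s * B $$ (s,k) * of_real (r^(2*k)) * cnj (z k)) < 0"
    using tri_lyap[of n "\<lambda>s k. B $$ (s,k)"] Bup Bd by blast
  define y where "y k = r^(2*k)" for k
  have ypos: "y k > 0" for k using r unfolding y_def by simp
  define zz where "zz u k = (\<Sum>a<n. of_real (u $ ix a) * P $$ (a,k))" for u :: "real^'n" and k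
  define Xc where "Xc a c = (\<Sum>k<n. P $$ (a,k) * of_real (y k) * cnj (P $$ (c,k)))" for a c
  define Pf :: "real^'n^'n" where "Pf = (\<chi> i j. Re (Xc (ixi i) (ixi j)))"
  have bil: "u \<bullet> (Pf *v v) = Re (\<Sum>k<n. of_real (y k) * zz u k * cnj (zz v k))" for u v :: "real^'n"
  proof -
    have "u \<bullet> (Pf *v v) = (\<Sum>i\<in>UNIV. u$i * (\<Sum>j\<in>UNIV. Re (Xc (ixi i) (ixi j)) * v$j))"
      unfolding inner_vec_def Pf_def matrix_vector_mult_def by simp
    also have "\<dots> = (\<Sum>a<n. \<Sum>c<n. u $ ix a * Re (Xc a c) * v $ ix c)"
      unfolding sum_ix n_def by (simp add: sum_distrib_left mult.assoc)
    also have "\<dots> = Re (\<Sum>a<n. \<Sum>c<n. of_real (u $ ix a) * Xc a c * of_real (v $ ix c))"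
      by (simp add: Re_sum)
    also have "(\<Sum>a<n. \<Sum>c<n. of_real (u $ ix a) * Xc a c * of_real (v $ ix c)) =
        (\<Sum>k<n. of_real (y k) * zz u k * cnj (zz v k))"
    proof -
      define F where "F a c k = of_real (y k) * (of_real (u $ ix a) * P $$ (a,k)) * cnj (of_real (v $ ix c) * P $$ (c,k))" for a c k
      have "(\<Sum>a<n. \<Sum>c<n. of_real (u $ ix a) * Xc a c * of_real (v $ ix c)) = (\<Sum>a<n. \<Sum>c<n. \<Sum>k<n. F a c k)"
        unfolding Xc_def F_def by (simp add: sum_distrib_left sum_distrib_right mult_ac)
      also have "\<dots> = (\<Sum>a<n. \<Sum>k<n. \<Sum>c<n. F a c k)"
        by (rule sum.cong[OF refl], rule sum.swap)
      also have "\<dots> = (\<Sum>k<n. \<Sum>a<n. \<Sum>c<n. F a c k)"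
        by (rule sum.swap)
      also have "\<dots> = (\<Sum>k<n. of_real (y k) * zz u k * cnj (zz v k))"
        unfolding F_def zz_def by (simp add: sum_distrib_left sum_distrib_right mult_ac)
      finally show ?thesis .
    qed
    finally show ?thesis .
  qed
  have Xsym: "Xc c a = cnj (Xc a c)" for a c
    unfolding Xc_def by (simp add: mult_ac)
  have Pfsym: "transpose Pf = Pf"
  proof -
    have "Re (Xc (ixi j) (ixi i)) = Re (Xc (ixi i) (ixi j))" for i j :: 'n
      using Xsym[of "ixi i" "ixi j"] by simp
    thus ?thesis unfolding Pf_def transpose_def Finite_Cartesian_Product.vec_eq_iff by simp
  qed
  have PQe: "(\<Sum>k<n. P $$ (a,k) * Q $$ (k,c)) = (if a = c then 1 else 0)" if "a < n" "c < n" for a c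
    using mult_entry[OF P Q that] PQ that by simp
  have zz_nz: "\<exists>k<n. zz x k \<noteq> 0" if x: "x \<noteq> 0" for x
  proof (rule ccontr)
    assume "\<not> (\<exists>k<n. zz x k \<noteq> 0)"
    hence z0: "\<And>k. k < n \<Longrightarrow> zz x k = 0" by auto
    have "x $ ix j = 0" if j: "j < n" for j
    proof -
      have "(\<Sum>k<n. zz x k * Q $$ (k,j)) = (\<Sum>k<n. \<Sum>a<n. of_real (x $ ix a) * (P $$ (a,k) * Q $$ (k,j)))"
        unfolding zz_def by (simp add: sum_distrib_right sum_distrib_left mult_ac)
      also have "\<dots> = (\<Sum>a<n. \<Sum>k<n. of_real (x $ ix a) * (P $$ (a,k) * Q $$ (k,j)))"
        by (rule sum.swap)
      also have "\<dots> = (\<Sum>a<n. of_real (x $ ix a) * (if a = j then 1 else 0))"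
        using j by (simp add: sum_distrib_left[symmetric] PQe)
      also have "\<dots> = (\<Sum>a<n. if a = j then of_real (x $ ix a) else 0)"
        by (intro sum.cong refl) simp
      also have "\<dots> = of_real (x $ ix j)" using j by (simp add: sum.delta)
      finally have "of_real (x $ ix j) = (\<Sum>k<n. zz x k * Q $$ (k,j))" ..
      also have "\<dots> = 0" using z0 by simp
      finally show ?thesis by simp
    qed
    hence "x = 0" unfolding Finite_Cartesian_Product.vec_eq_iff
      by (metis ix_ixi ixi_lt n_def zero_index)
    thus False using x by simp
  qed
  have posP: "pos_def Pf"
    unfolding pos_def_def
  proof (intro conjI allI impI Pfsym)
    fix x :: "real^'n" assume x: "x \<noteq> 0"
    obtain k0 where k0: "k0 < n" "zz x k0 \<noteq> 0" using zz_nz[OF x] by auto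
    have "x \<bullet> (Pf *v x) = (\<Sum>k<n. y k * (cmod (zz x k))\<^sup>2)"
      unfolding bil Re_sum by (intro sum.cong refl) (simp add: mult.assoc zcnj)
    also have "\<dots> > 0"
    proof (rule sum_pos2[of _ k0])
      show "0 < y k0 * (cmod (zz x k0))\<^sup>2" using k0 ypos[of k0] by simp
      show "\<And>i. i \<in> {..<n} \<Longrightarrow> 0 \<le> y i * (cmod (zz x i))\<^sup>2"
        by (intro mult_nonneg_nonneg less_imp_le[OF ypos] zero_le_power2)
    qed (use k0 in auto)
    finally show "x \<bullet> (Pf *v x) > 0" .
  qed
  have negP: "neg_def (M ** Pf + Pf ** transpose M)"
    unfolding neg_def_def
  proof (intro conjI allI impI)
    show "transpose (M ** Pf + Pf ** transpose M) = M ** Pf + Pf ** transpose M"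
      by (simp add: transpose_add_vec matrix_transpose_mul Pfsym add.commute)
  next
    fix x :: "real^'n" assume x: "x \<noteq> 0"
    define x' where "x' = transpose M *v x"
    have ev1: "x \<bullet> ((M ** Pf + Pf ** transpose M) *v x) = x' \<bullet> (Pf *v x) + x \<bullet> (Pf *v x')"
      unfolding x'_def
      by (simp add: matrix_vector_mult_add_rdistrib inner_add_right matrix_vector_mul_assoc[symmetric]
          dot_lmul_matrix[symmetric])
    have sw: "Re (\<Sum>k<n. of_real (y k) * zz x k * cnj (zz x' k)) = Re (\<Sum>k<n. of_real (y k) * zz x' k * cnj (zz x k))"
      unfolding Re_sum by (intro sum.cong refl) (simp add: algebra_simps)
    have zz': "zz x' k = (\<Sum>s<n. zz x s * B $$ (s,k))" if k: "k < n" for k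
    proof -
      have x'e: "x' $ ix a = (\<Sum>c<n. M $ ix c $ ix a * x $ ix c)" for a
        unfolding x'_def by (simp add: matrix_vector_mult_def transpose_def sum_ix n_def)
      have "zz x' k = (\<Sum>a<n. \<Sum>c<n. of_real (x $ ix c) * (A $$ (c,a) * P $$ (a,k)))"
        unfolding zz_def x'e by (intro sum.cong refl) (simp add: sum_distrib_right sum_distrib_left Aent mult_ac)
      also have "\<dots> = (\<Sum>c<n. \<Sum>a<n. of_real (x $ ix c) * (A $$ (c,a) * P $$ (a,k)))"
        by (rule sum.swap)
      also have "\<dots> = (\<Sum>c<n. of_real (x $ ix c) * (A * P) $$ (c,k))"
        using k by (intro sum.cong refl) (simp add: mult_entry[OF A P] sum_distrib_left)
      also have "\<dots> = (\<Sum>c<n. \<Sum>s<n. of_real (x $ ix c) * (P $$ (c,s) * B $$ (s,k)))"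
        unfolding AP using k by (intro sum.cong refl) (simp add: mult_entry[OF P B] sum_distrib_left)
      also have "\<dots> = (\<Sum>s<n. \<Sum>c<n. of_real (x $ ix c) * (P $$ (c,s) * B $$ (s,k)))"
        by (rule sum.swap)
      also have "\<dots> = (\<Sum>s<n. zz x s * B $$ (s,k))"
        unfolding zz_def by (simp add: sum_distrib_right sum_distrib_left mult_ac)
      finally show ?thesis .
    qed
    have "x \<bullet> ((M ** Pf + Pf ** transpose M) *v x) = 2 * Re (\<Sum>k<n. of_real (y k) * zz x' k * cnj (zz x k))"
      unfolding ev1 bil sw by simp
    also have "(\<Sum>k<n. of_real (y k) * zz x' k * cnj (zz x k)) =
        (\<Sum>k<n. \<Sum>s<n. zz x s * B $$ (s,k) * of_real (r^(2*k)) * cnj (zz x k))"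
      by (intro sum.cong refl) (simp add: zz' sum_distrib_left sum_distrib_right y_def mult_ac)
    also have "\<dots> = (\<Sum>s<n. \<Sum>k<n. zz x s * B $$ (s,k) * of_real (r^(2*k)) * cnj (zz x k))"
      by (rule sum.swap)
    finally have "x \<bullet> ((M ** Pf + Pf ** transpose M) *v x) =
       2 * Re (\<Sum>s<n. \<Sum>k<n. zz x s * B $$ (s,k) * of_real (r^(2*k)) * cnj (zz x k))" .
    with rl[OF zz_nz[OF x]] show "x \<bullet> ((M ** Pf + Pf ** transpose M) *v x) < 0" by simp
  qed
  show ?thesis using posP negP by blast
qed



hide_const (open) Matrix.mat

lemma inv_props: "invertible A \<Longrightarrow> A ** matrix_inv A = mat 1 \<and> matrix_inv A ** A = mat 1"
  unfolding invertible_def matrix_inv_def by (rule someI_ex)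

lemma posdef_inv:
  fixes P :: "real^'n^'n"
  assumes p: "pos_def P" shows "invertible P"
proof -
  have "inj ((*v) P)"
  proof (rule injI)
    fix x y assume "P *v x = P *v y"
    hence "P *v (x - y) = 0" by (simp add: matrix_vector_mult_diff_distrib)
    hence "(x - y) \<bullet> (P *v (x - y)) = 0" by simp
    thus "x = y" using p unfolding pos_def_def by (metis less_irrefl right_minus_eq)
  qed
  thus ?thesis using matrix_left_invertible_injective invertible_left_inverse by blast
qed

lemma cmat_mult: "cmat (A ** B) = cmat A ** cmat B"
  unfolding cmat_def matrix_matrix_mult_def by (simp add: Finite_Cartesian_Product.vec_eq_iff)

lemma cmat_one: "cmat (mat 1 :: real^'n^'n) = mat 1"
  unfolding cmat_def Finite_Cartesian_Product.mat_def by (simp add: Finite_Cartesian_Product.vec_eq_iff)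

lemma cmat_add: "cmat (A + B) = cmat A + cmat B"
  unfolding cmat_def by (simp add: Finite_Cartesian_Product.vec_eq_iff)

lemma cmat_cvec: "cmat G *v (\<chi> i. complex_of_real (x$i)) = (\<chi> i. complex_of_real ((G *v x)$i))"
  unfolding cmat_def matrix_vector_mult_def by (simp add: Finite_Cartesian_Product.vec_eq_iff)

definition hq :: "real^'n^'n \<Rightarrow> complex^'n \<Rightarrow> complex" where
  "hq G u = (\<Sum>i\<in>UNIV. cnj (u$i) * (cmat G *v u)$i)"

lemma hq_expand: "hq G u = (\<Sum>i\<in>UNIV. \<Sum>j\<in>UNIV. cnj (u$i) * of_real (G$i$j) * u$j)"
  unfolding hq_def cmat_def matrix_vector_mult_def by (simp add: sum_distrib_left mult.assoc)

lemma hq_re: "Re (hq G u) = (\<chi> i. Re (u$i)) \<bullet> (G *v (\<chi> i. Re (u$i))) + (\<chi> i. Im (u$i)) \<bullet> (G *v (\<chi> i. Im (u$i)))"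
proof -
  have "Re (hq G u) = (\<Sum>i\<in>UNIV. \<Sum>j\<in>UNIV. G$i$j * (Re (u$i) * Re (u$j)) + G$i$j * (Im (u$i) * Im (u$j)))"
    unfolding hq_expand Re_sum by (intro sum.cong refl) (simp add: algebra_simps)
  also have "\<dots> = (\<chi> i. Re (u$i)) \<bullet> (G *v (\<chi> i. Re (u$i))) + (\<chi> i. Im (u$i)) \<bullet> (G *v (\<chi> i. Im (u$i)))"
    unfolding inner_vec_def matrix_vector_mult_def
    by (simp add: sum.distrib sum_distrib_left algebra_simps)
  finally show ?thesis .
qed

lemma hq_transpose: "hq (transpose G) u = cnj (hq G u)"
proof -
  have "hq (transpose G) u = (\<Sum>i\<in>UNIV. \<Sum>j\<in>UNIV. cnj (u$i) * of_real (G$j$i) * u$j)"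
    unfolding hq_expand by (simp add: transpose_def)
  also have "\<dots> = (\<Sum>j\<in>UNIV. \<Sum>i\<in>UNIV. cnj (u$i) * of_real (G$j$i) * u$j)"
    by (rule sum.swap)
  also have "\<dots> = cnj (hq G u)"
    unfolding hq_expand by (simp add: mult_ac)
  finally show ?thesis .
qed

lemma hq_add: "hq (G1 + G2) u = hq G1 u + hq G2 u"
  unfolding hq_def cmat_add matrix_vector_mult_add_rdistrib by (simp add: sum.distrib algebra_simps)

lemma nz_parts: "(u :: complex^'n) \<noteq> 0 \<Longrightarrow> (\<chi> i. Re (u$i)) \<noteq> 0 \<or> (\<chi> i. Im (u$i)) \<noteq> 0"
  by (auto simp: Finite_Cartesian_Product.vec_eq_iff complex_eq_iff)

lemma hq_pos: assumes "pos_def P" "u \<noteq> 0" shows "Re (hq P u) > 0"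
proof -
  have ge: "x \<bullet> (P *v x) \<ge> 0" for x using assms(1) unfolding pos_def_def
    by (cases "x = 0") (auto intro: less_imp_le)
  have gt: "x \<noteq> 0 \<Longrightarrow> x \<bullet> (P *v x) > 0" for x using assms(1) unfolding pos_def_def by auto
  show ?thesis unfolding hq_re using nz_parts[OF assms(2)] ge gt
    by (meson add_nonneg_pos add_pos_nonneg)
qed

lemma hq_neg: assumes "neg_def P" "u \<noteq> 0" shows "Re (hq P u) < 0"
proof -
  have ge: "x \<bullet> (P *v x) \<le> 0" for x using assms(1) unfolding neg_def_def
    by (cases "x = 0") (auto intro: less_imp_le)
  have gt: "x \<noteq> 0 \<Longrightarrow> x \<bullet> (P *v x) < 0" for x using assms(1) unfolding neg_def_def by auto
  show ?thesis unfolding hq_re using nz_parts[OF assms(2)] ge gt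
    by (meson add_neg_nonpos add_nonpos_neg)
qed

lemma lyap_suff:
  fixes N P :: "real^'n^'n"
  assumes p: "pos_def P" and ng: "neg_def (N ** P + P ** transpose N)"
  shows "hurwitz N"
  unfolding hurwitz_def
proof (intro allI impI)
  fix c assume "Defs.eigenvalue N c"
  then obtain v where v0: "v \<noteq> 0" and ev: "cmat N *v v = c *s v"
    unfolding Defs.eigenvalue_def by auto
  define R where "R = matrix_inv P"
  have PR: "P ** R = mat 1" using inv_props[OF posdef_inv[OF p]] R_def by auto
  define u where "u = cmat R *v v"
  have Pu: "cmat P *v u = v"
    unfolding u_def matrix_vector_mul_assoc cmat_mult[symmetric] PR cmat_one by simp
  have u0: "u \<noteq> 0" using Pu v0 by auto
  define q where "q = hq P u"
  have sym: "transpose P = P" using p unfolding pos_def_def by auto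
  have qim: "Im q = 0"
  proof -
    have "q = cnj q" unfolding q_def using hq_transpose[of P u] sym by simp
    thus ?thesis by (metis cnj.simps(2) complex_eq_iff neg_equal_zero)
  qed
  have qre: "Re q > 0" unfolding q_def by (rule hq_pos[OF p u0])
  have h1: "hq (N ** P) u = c * q"
  proof -
    have "cmat (N ** P) *v u = c *s (cmat P *v u)"
      unfolding cmat_mult matrix_vector_mul_assoc[symmetric] Pu ev ..
    thus ?thesis unfolding hq_def q_def by (simp add: sum_distrib_left mult_ac)
  qed
  have h2: "hq (P ** transpose N) u = cnj (c * q)"
  proof -
    have "P ** transpose N = transpose (N ** P)" by (simp add: matrix_transpose_mul sym)
    thus ?thesis by (simp only: hq_transpose h1)
  qed
  have "Re (hq (N ** P + P ** transpose N) u) = 2 * Re c * Re q"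
    unfolding hq_add h1 h2 using qim by simp
  moreover have "Re (hq (N ** P + P ** transpose N) u) < 0" by (rule hq_neg[OF ng u0])
  ultimately have "Re c * Re q < 0" by simp
  thus "Re c < 0" using qre by (simp add: mult_less_0_iff)
qed

lemma range_orth:
  fixes f :: "'a::euclidean_space \<Rightarrow> 'b::euclidean_space"
  assumes lin: "linear f" and h: "\<And>w. (\<And>z. w \<bullet> f z = 0) \<Longrightarrow> y \<bullet> w = 0"
  shows "y \<in> range f"
proof -
  obtain p w where p: "p \<in> span (range f)" and w: "\<And>x. x \<in> span (range f) \<Longrightarrow> Linear_Algebra.orthogonal w x"
      and y: "y = p + w"
    using orthogonal_subspace_decomp_exists[of "range f" y] by metis
  have pr: "p \<in> range f" using p lin
    by (metis linear_subspace_image real_vector.span_eq_iff real_vector.subspace_UNIV)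
  have "w \<bullet> f z = 0" for z using w[of "f z"] by (simp add: span_base Linear_Algebra.orthogonal_def)
  hence yw: "y \<bullet> w = 0" by (rule h)
  have pw: "p \<bullet> w = 0" using w[OF p] by (simp add: Linear_Algebra.orthogonal_def inner_commute)
  have "w \<bullet> w = 0" using yw pw by (simp add: y inner_add_left)
  hence "w = 0" by simp
  thus ?thesis using pr y by simp
qed



no_notation scalar_prod (infix \<open>\<bullet>\<close> 70)

lemma matrix_add_rdist: "((B + C) ** A) = (B ** A) + (C ** A :: 'a::semiring_1^_^_)"
  by (vector matrix_matrix_mult_def sum.distrib[symmetric] field_simps)

definition outer :: "real^'a \<Rightarrow> real^'b \<Rightarrow> real^'b^'a" where
  "outer c d = (\<chi> i j. c$i * d$j)"

lemma outer_mult: "outer c d ** X = outer c (transpose X *v d)"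
  unfolding outer_def matrix_matrix_mult_def matrix_vector_mult_def transpose_def
  by (simp add: Finite_Cartesian_Product.vec_eq_iff sum_distrib_left mult_ac)

lemma outer_add: "outer c a + outer c b = outer c (a + b)"
  unfolding outer_def by (simp add: Finite_Cartesian_Product.vec_eq_iff algebra_simps)

lemma outer_zero: "outer c 0 = 0"
  unfolding outer_def by (simp add: Finite_Cartesian_Product.vec_eq_iff)

lemma outer_vec: "outer c d *v x = (d \<bullet> x) *\<^sub>R c"
  unfolding outer_def matrix_vector_mult_def inner_vec_def
  by (simp add: Finite_Cartesian_Product.vec_eq_iff sum_distrib_left mult_ac)

lemma step_a:
  fixes X :: "real^'l^'n" and U :: "real^'l^'m" and W :: "real^'l^'n" and K :: "real^'n^'m"
  assumes stab: "\<And>A B. A ** X + B ** U = W \<Longrightarrow> hurwitz (A + B ** K)"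
    and A0: "A0 ** X + B0 ** U = W"
    and rho: "transpose X *v \<rho>1 + transpose U *v \<rho>2 = 0"
  shows "\<rho>1 + transpose K *v \<rho>2 = 0"
proof (rule ccontr)
  define r where "r = \<rho>1 + transpose K *v \<rho>2"
  assume "r \<noteq> 0"
  hence rr: "r \<bullet> r \<noteq> 0" by simp
  define M0 where "M0 = A0 + B0 ** K"
  define c where "c = (- 1 / (r \<bullet> r)) *\<^sub>R (M0 *v r)"
  define A' where "A' = A0 + outer c \<rho>1"
  define B' where "B' = B0 + outer c \<rho>2"
  have "A' ** X + B' ** U = W"
  proof -
    have "A' ** X + B' ** U = (A0 ** X + B0 ** U) + outer c (transpose X *v \<rho>1 + transpose U *v \<rho>2)"
      unfolding A'_def B'_def by (simp add: matrix_add_rdist outer_mult outer_add[symmetric] algebra_simps)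
    thus ?thesis using A0 rho by (simp add: outer_zero)
  qed
  hence hw: "hurwitz (A' + B' ** K)" by (rule stab)
  have eq: "A' + B' ** K = M0 + outer c r"
    unfolding A'_def B'_def M0_def r_def
    by (simp add: matrix_add_rdist outer_mult outer_add[symmetric] algebra_simps)
  have null: "(A' + B' ** K) *v r = 0"
    unfolding eq matrix_vector_mult_add_rdistrib outer_vec c_def using rr by simp
  define v where "v = (\<chi> i. complex_of_real (r$i))"
  have v0: "v \<noteq> 0" using \<open>r \<noteq> 0\<close> unfolding v_def by (auto simp: Finite_Cartesian_Product.vec_eq_iff)
  have "cmat (A' + B' ** K) *v v = 0 *s v"
    unfolding v_def cmat_cvec null by (simp add: Finite_Cartesian_Product.vec_eq_iff)
  hence "Defs.eigenvalue (A' + B' ** K) 0" unfolding Defs.eigenvalue_def using v0 by blast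
  thus False using hw unfolding hurwitz_def by fastforce
qed

lemma step_b:
  fixes X :: "real^'l^'n" and U :: "real^'l^'m" and K :: "real^'n^'m"
  assumes h: "\<And>\<rho>1 \<rho>2. transpose X *v \<rho>1 + transpose U *v \<rho>2 = 0 \<Longrightarrow> \<rho>1 + transpose K *v \<rho>2 = 0"
  shows "\<exists>\<Theta> :: real^'n^'l. X ** \<Theta> = mat 1 \<and> U ** \<Theta> = K"
proof -
  define f where "f z = (X *v z, U *v z)" for z
  have lin: "linear f" unfolding f_def
    by (intro linearI) (simp_all add: matrix_vector_right_distrib matrix_vector_mult_scaleR)
  have col: "\<exists>z. X *v z = axis j 1 \<and> U *v z = K *v axis j 1" for j
  proof -
    have "(axis j 1, K *v axis j 1) \<in> range f"
    proof (rule range_orth[OF lin])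
      fix w :: "(real^'n) \<times> (real^'m)"
      assume hw: "\<And>z. w \<bullet> f z = 0"
      obtain \<rho>1 \<rho>2 where w: "w = (\<rho>1, \<rho>2)" by (cases w)
      have "(transpose X *v \<rho>1 + transpose U *v \<rho>2) \<bullet> z = 0" for z
      proof -
        have "(transpose X *v \<rho>1 + transpose U *v \<rho>2) \<bullet> z = \<rho>1 \<bullet> (X *v z) + \<rho>2 \<bullet> (U *v z)"
          by (simp add: inner_add_left dot_lmul_matrix)
        also have "\<dots> = w \<bullet> f z" by (simp add: w f_def)
        also have "\<dots> = 0" by (rule hw)
        finally show ?thesis .
      qed
      hence "transpose X *v \<rho>1 + transpose U *v \<rho>2 = 0"
        using inner_eq_zero_iff[of "transpose X *v \<rho>1 + transpose U *v \<rho>2"] by simp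
      hence e: "\<rho>1 = - (transpose K *v \<rho>2)" using h by (simp add: eq_neg_iff_add_eq_0)
      have "(K *v axis j 1) \<bullet> \<rho>2 = (\<rho>2 v* K) \<bullet> axis j 1"
        by (metis dot_lmul_matrix inner_commute)
      also have "\<dots> = axis j 1 \<bullet> (transpose K *v \<rho>2)"
        by (metis inner_commute transpose_matrix_vector)
      finally have "(K *v axis j 1) \<bullet> \<rho>2 = axis j 1 \<bullet> (transpose K *v \<rho>2)" .
      thus "(axis j 1, K *v axis j 1) \<bullet> w = 0"
        unfolding w e by (simp add: inner_Pair)
    qed
    thus ?thesis unfolding f_def by auto
  qed
  then obtain zf where zf: "\<And>j. X *v zf j = axis j 1 \<and> U *v zf j = K *v axis j 1"
    by metis
  define \<Theta> :: "real^'n^'l" where "\<Theta> = (\<chi> i j. zf j $ i)"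
  have "X ** \<Theta> = mat 1"
  proof -
    have "(X ** \<Theta>) $ a $ j = (X *v zf j) $ a" for a j
      unfolding \<Theta>_def matrix_matrix_mult_def matrix_vector_mult_def by simp
    thus ?thesis using zf unfolding Finite_Cartesian_Product.vec_eq_iff
      by (simp add: Finite_Cartesian_Product.mat_def axis_def)
  qed
  moreover have "U ** \<Theta> = K"
  proof -
    have "(U ** \<Theta>) $ a $ j = (K *v axis j 1) $ a" for a j
      using zf[of j] unfolding \<Theta>_def matrix_matrix_mult_def matrix_vector_mult_def
      by (simp add: Finite_Cartesian_Product.vec_eq_iff)
    moreover have "(K *v axis j 1) $ a = K $ a $ j" for a j
      unfolding matrix_vector_mult_def axis_def by (simp add: if_distrib cong: if_cong)
    ultimately show ?thesis unfolding Finite_Cartesian_Product.vec_eq_iff by simp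
  qed
  ultimately show ?thesis by blast
qed



theorem theorem2:
  fixes X :: "real^'l^'n" and U :: "real^'l^'m" and V :: "real^'l^'q"
    and E :: "real^'q^'n" and D11 :: "real^'l^'l"
  assumes nonempty: "Sigma_data X U V E D11 \<noteq> {}"
  shows "((\<exists>K :: real^'n^'m. \<forall>(A, B) \<in> Sigma_data X U V E D11. hurwitz (A + B ** K))
          \<longleftrightarrow> (\<exists>\<theta> :: real^'n^'l. X ** \<theta> = transpose (X ** \<theta>) \<and> pos_def (X ** \<theta>) \<and>
                 neg_def (transpose \<theta> ** transpose (X ** D11 - E ** V) + (X ** D11 - E ** V) ** \<theta>)))
       \<and> (\<forall>\<theta> :: real^'n^'l. (X ** \<theta> = transpose (X ** \<theta>) \<and> pos_def (X ** \<theta>) \<and>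
                 neg_def (transpose \<theta> ** transpose (X ** D11 - E ** V) + (X ** D11 - E ** V) ** \<theta>))
            \<longrightarrow> X ** (\<theta> ** matrix_inv (X ** \<theta>)) = mat 1
              \<and> (\<forall>(A, B) \<in> Sigma_data X U V E D11.
                   hurwitz (A + B ** (U ** \<theta> ** matrix_inv (X ** \<theta>)))))"
proof -
  define W where "W = X ** D11 - E ** V"
  have Sig: "(A, B) \<in> Sigma_data X U V E D11 \<longleftrightarrow> A ** X + B ** U = W" for A B
    unfolding Sigma_data_def W_def eq_diff_eq by auto
  have P2: "X ** (\<theta> ** matrix_inv (X ** \<theta>)) = mat 1 \<and>
      (\<forall>(A, B) \<in> Sigma_data X U V E D11. hurwitz (A + B ** (U ** \<theta> ** matrix_inv (X ** \<theta>))))"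
    if g1: "X ** \<theta> = transpose (X ** \<theta>)" and g2: "pos_def (X ** \<theta>)"
      and g3: "neg_def (transpose \<theta> ** transpose W + W ** \<theta>)" for \<theta> :: "real^'n^'l"
  proof
    define P where "P = X ** \<theta>"
    define R where "R = matrix_inv P"
    have PR: "P ** R = mat 1" and RP: "R ** P = mat 1"
      using inv_props[OF posdef_inv[OF g2[folded P_def]]] R_def by auto
    show "X ** (\<theta> ** matrix_inv (X ** \<theta>)) = mat 1"
      using PR unfolding R_def P_def by (simp add: matrix_mul_assoc)
    show "\<forall>(A, B) \<in> Sigma_data X U V E D11. hurwitz (A + B ** (U ** \<theta> ** matrix_inv (X ** \<theta>)))"
    proof (intro ballI, clarify)
      fix A B assume "(A, B) \<in> Sigma_data X U V E D11"
      hence AB: "A ** X + B ** U = W" using Sig by blast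
      define N where "N = A + B ** (U ** \<theta> ** R)"
      have KP: "(U ** \<theta> ** R) ** P = U ** \<theta>"
        by (metis RP matrix_mul_assoc matrix_mul_rid)
      have NP: "N ** P = W ** \<theta>"
      proof -
        have "N ** P = A ** P + B ** ((U ** \<theta> ** R) ** P)"
          unfolding N_def by (simp add: matrix_add_rdist matrix_mul_assoc)
        also have "\<dots> = (A ** X + B ** U) ** \<theta>"
          unfolding KP unfolding P_def by (simp only: matrix_add_rdist matrix_mul_assoc)
        finally show ?thesis using AB by simp
      qed
      have Psym: "transpose P = P" using g1 unfolding P_def by simp
      have "transpose \<theta> ** transpose W = P ** transpose N"
        by (metis NP Psym matrix_transpose_mul)
      hence "neg_def (N ** P + P ** transpose N)" using g3 NP by (simp add: add.commute)
      hence "hurwitz N" using lyap_suff g2 unfolding P_def by blast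
      thus "hurwitz (A + B ** (U ** \<theta> ** matrix_inv (X ** \<theta>)))" unfolding N_def R_def P_def .
    qed
  qed
  have P1: "(\<exists>K :: real^'n^'m. \<forall>(A, B) \<in> Sigma_data X U V E D11. hurwitz (A + B ** K))
          \<longleftrightarrow> (\<exists>\<theta> :: real^'n^'l. X ** \<theta> = transpose (X ** \<theta>) \<and> pos_def (X ** \<theta>) \<and>
                 neg_def (transpose \<theta> ** transpose W + W ** \<theta>))"
  proof
    assume "\<exists>\<theta> :: real^'n^'l. X ** \<theta> = transpose (X ** \<theta>) \<and> pos_def (X ** \<theta>) \<and>
                 neg_def (transpose \<theta> ** transpose W + W ** \<theta>)"
    then obtain \<theta> :: "real^'n^'l" where "X ** \<theta> = transpose (X ** \<theta>)" "pos_def (X ** \<theta>)"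
        "neg_def (transpose \<theta> ** transpose W + W ** \<theta>)" by blast
    from P2[OF this] show "\<exists>K :: real^'n^'m. \<forall>(A, B) \<in> Sigma_data X U V E D11. hurwitz (A + B ** K)"
      by blast
  next
    assume "\<exists>K :: real^'n^'m. \<forall>(A, B) \<in> Sigma_data X U V E D11. hurwitz (A + B ** K)"
    then obtain K :: "real^'n^'m" where K: "\<forall>(A, B) \<in> Sigma_data X U V E D11. hurwitz (A + B ** K)"
      by blast
    have stab: "hurwitz (A + B ** K)" if "A ** X + B ** U = W" for A B
      using K that Sig by blast
    obtain A0 B0 where "(A0, B0) \<in> Sigma_data X U V E D11" using nonempty by auto
    hence A0: "A0 ** X + B0 ** U = W" using Sig by blast
    obtain \<Theta> :: "real^'n^'l" where XT: "X ** \<Theta> = mat 1" and UT: "U ** \<Theta> = K"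
      using step_b[OF step_a[OF stab A0]] by blast
    define M where "M = A0 + B0 ** K"
    have hM: "hurwitz M" unfolding M_def by (rule stab[OF A0])
    have MW: "M = W ** \<Theta>"
    proof -
      have "M = A0 ** (X ** \<Theta>) + B0 ** (U ** \<Theta>)" unfolding M_def XT UT by simp
      also have "\<dots> = (A0 ** X + B0 ** U) ** \<Theta>" by (simp add: matrix_add_rdist matrix_mul_assoc)
      finally show ?thesis using A0 by simp
    qed
    obtain P where pP: "pos_def P" and nP: "neg_def (M ** P + P ** transpose M)"
      using lyap_conv[OF hM] by blast
    have Psym: "transpose P = P" using pP unfolding pos_def_def by auto
    define \<theta> where "\<theta> = \<Theta> ** P"
    have Xt: "X ** \<theta> = P" unfolding \<theta>_def by (simp add: matrix_mul_assoc XT)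
    have Wt: "W ** \<theta> = M ** P" unfolding \<theta>_def MW by (simp add: matrix_mul_assoc)
    have tt: "transpose \<theta> ** transpose W = P ** transpose M"
      by (metis Wt Psym matrix_transpose_mul)
    show "\<exists>\<theta> :: real^'n^'l. X ** \<theta> = transpose (X ** \<theta>) \<and> pos_def (X ** \<theta>) \<and>
                 neg_def (transpose \<theta> ** transpose W + W ** \<theta>)"
      using Xt Psym pP nP tt Wt by (intro exI[of _ \<theta>]) (simp add: add.commute)
  qed
  show ?thesis using P1 P2 unfolding W_def by blast
qed

end
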